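(* Assume $G$ is connected. Let $S\subset V$ with $\emptyset\ne S\ne V$, and let $R_S=\mathrm{vol}\,S/\mathrm{vol}\,V$; assume $R_S\ne\frac12$. Let $\lambda_2>0$ be the second smallest eigenvalue of $\Delta$. If $$\tau>\tau_t(S):=\frac1{\lambda_2}\log\left(\frac{(\mathrm{vol}\,S)^{1/2}(\mathrm{vol}\,S^c)^{1/2}}{(\mathrm{vol}\,V)^{1/2}\,|R_S-\frac12|\,d_-^{r/2}}\right),$$ then the set $S'=\{i\in V:(e^{-\tau\Delta}\chi_S)_i\ge\frac12\}$ equals $V$ if $R_S>\frac12$, and equals $\emptyset$ if $R_S<\frac12$.
   Context: $G=(V,E)$ is a finite undirected weighted graph with vertex set $V=\{1,\dots,n\}$. The weights satisfy $\omega_{ij}=\omega_{ji}\ge0$, with $\omega_{ij}>0$ iff $\{i,j\}\in E$, and $\omega_{ii}=0$. The degrees are $d_i=\sum_j\omega_{ij}>0$, and $d_-=\min_id_i$. A parameter $r\in[0,1]$ is fixed. For $S\subset V$, $S^c=V\setminus S$, $\chi_S$ is the indicator of $S$, and $\mathrm{vol}\,S=\sum_{i\in S}d_i^r$. The graph Laplacian is $(\Delta u)_i=d_i^{-r}\sum_j\omega_{ij}(u_i-u_j)$, whose eigenvalues (those of the matrix $D^{-r}(D-A)$) are $0=\lambda_1\le\lambda_2\le\dots\le\lambda_n$. $e^{-t\Delta}$ is the solution operator of $\dot u=-\Delta u$. *)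

theory Defs
  imports "Jordan_Normal_Form.Char_Poly" "HOL-Analysis.Analysis"
begin

text \<open>Vertices are 0,...,n-1 (a relabelling of 1,...,n). Weights w i j.\<close>

definition deg :: "(nat \<Rightarrow> nat \<Rightarrow> real) \<Rightarrow> nat \<Rightarrow> nat \<Rightarrow> real" where
  "deg w n i = (\<Sum>j<n. w i j)"

definition dmin :: "(nat \<Rightarrow> nat \<Rightarrow> real) \<Rightarrow> nat \<Rightarrow> real" where
  "dmin w n = Min (deg w n ` {..<n})"

definition vol :: "(nat \<Rightarrow> nat \<Rightarrow> real) \<Rightarrow> real \<Rightarrow> nat \<Rightarrow> nat set \<Rightarrow> real" where
  "vol w r n S = (\<Sum>i\<in>S. deg w n i powr r)"

definition graph_connected :: "(nat \<Rightarrow> nat \<Rightarrow> real) \<Rightarrow> nat \<Rightarrow> bool" where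
  "graph_connected w n = (\<forall>i<n. \<forall>j<n. (\<lambda>a b. a < n \<and> b < n \<and> w a b > 0)\<^sup>*\<^sup>* i j)"

definition lap :: "(nat \<Rightarrow> nat \<Rightarrow> real) \<Rightarrow> real \<Rightarrow> nat \<Rightarrow> (nat \<Rightarrow> real) \<Rightarrow> nat \<Rightarrow> real" where
  "lap w r n u i = deg w n i powr (-r) * (\<Sum>j<n. w i j * (u i - u j))"

definition lap_mat :: "(nat \<Rightarrow> nat \<Rightarrow> real) \<Rightarrow> real \<Rightarrow> nat \<Rightarrow> real mat" where
  "lap_mat w r n = Matrix.mat n n (\<lambda>(i,j). deg w n i powr (-r) *
       ((if i = j then deg w n i else 0) - w i j))"

text \<open>k-th smallest eigenvalue counted with algebraic multiplicity (k >= 1).\<close>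
definition kth_eigenvalue :: "real mat \<Rightarrow> nat \<Rightarrow> real" where
  "kth_eigenvalue A k = Inf {\<mu>. poly (char_poly A) \<mu> = 0 \<and>
      (\<Sum>\<nu>\<in>{\<nu>. poly (char_poly A) \<nu> = 0 \<and> \<nu> \<le> \<mu>}. order \<nu> (char_poly A)) \<ge> k}"

text \<open>u solves du/dt = - Delta u for all real times (so u t = e^{-t Delta} (u 0)).\<close>
definition heat_solution :: "(nat \<Rightarrow> nat \<Rightarrow> real) \<Rightarrow> real \<Rightarrow> nat \<Rightarrow> (real \<Rightarrow> nat \<Rightarrow> real) \<Rightarrow> bool" where
  "heat_solution w r n u = (\<forall>t. \<forall>i<n.
      ((\<lambda>s. u s i) has_real_derivative (- lap w r n (u t) i)) (at t))"

end

theory Submission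
  imports Defs
begin


locale grph =
  fixes w :: "nat \<Rightarrow> nat \<Rightarrow> real" and n :: nat and r :: real
  assumes sym: "\<And>i j. i < n \<Longrightarrow> j < n \<Longrightarrow> w i j = w j i"
    and nonneg: "\<And>i j. i < n \<Longrightarrow> j < n \<Longrightarrow> w i j \<ge> 0"
    and degpos: "\<And>i. i < n \<Longrightarrow> deg w n i > 0"
    and conn: "graph_connected w n"
begin

definition p where "p i = deg w n i powr r"
definition N where "N v = (\<Sum>i<n. p i * v i ^ 2)"
definition Bf where "Bf a b = (\<Sum>i<n. \<Sum>j<n. w i j * a i * (b i - b j))"

lemma p_pos: assumes "i < n" shows "p i > 0" using degpos[OF assms] by (simp add: p_def)

lemma p_lap: "i < n \<Longrightarrow> p i * lap w r n v i = (\<Sum>j<n. w i j * (v i - v j))"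
proof -
  assume i: "i < n"
  have "p i * deg w n i powr (-r) = 1"
    using degpos[OF i] by (simp add: p_def powr_add[symmetric])
  then show ?thesis unfolding lap_def by (metis mult.assoc mult_1)
qed

lemma swap_sum: "(\<Sum>i<n. \<Sum>j<n. w i j * f i j) = (\<Sum>i<n. \<Sum>j<n. w i j * f j i)"
proof -
  have "(\<Sum>i<n. \<Sum>j<n. w i j * f i j) = (\<Sum>j<n. \<Sum>i<n. w i j * f i j)"
    by (rule sum.swap)
  also have "\<dots> = (\<Sum>j<n. \<Sum>i<n. w j i * f i j)"
    by (intro sum.cong refl) (simp add: sym)
  finally show ?thesis .
qed

lemma sum_p_lap: "(\<Sum>i<n. p i * lap w r n v i) = 0"
proof -
  have 1: "(\<Sum>i<n. p i * lap w r n v i) = (\<Sum>i<n. \<Sum>j<n. w i j * (v i - v j))"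
    by (simp add: p_lap)
  have "(\<Sum>i<n. \<Sum>j<n. w i j * (v i - v j)) = (\<Sum>i<n. \<Sum>j<n. w i j * (v j - v i))"
    by (rule swap_sum)
  also have "\<dots> = - (\<Sum>i<n. \<Sum>j<n. w i j * (v i - v j))"
    by (simp add: sum_negf[symmetric] algebra_simps)
  finally show ?thesis using 1 by simp
qed

lemma Bf_lap: "Bf a b = (\<Sum>i<n. p i * a i * lap w r n b i)"
  unfolding Bf_def
  by (intro sum.cong refl) (simp add: mult.assoc p_lap sum_distrib_left algebra_simps)

lemma Bf_2: "2 * Bf a b = (\<Sum>i<n. \<Sum>j<n. w i j * ((a i - a j) * (b i - b j)))"
proof -
  have "Bf a b = (\<Sum>i<n. \<Sum>j<n. w i j * (a i * (b i - b j)))"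
    unfolding Bf_def by (simp add: mult.assoc)
  also have "\<dots> = (\<Sum>i<n. \<Sum>j<n. w i j * (a j * (b j - b i)))"
    by (rule swap_sum)
  finally have "2 * Bf a b = (\<Sum>i<n. \<Sum>j<n. w i j * (a i * (b i - b j))) + (\<Sum>i<n. \<Sum>j<n. w i j * (a j * (b j - b i)))"
    unfolding Bf_def by (simp add: mult.assoc)
  also have "\<dots> = (\<Sum>i<n. \<Sum>j<n. w i j * ((a i - a j) * (b i - b j)))"
    by (simp add: sum.distrib[symmetric] algebra_simps)
  finally show ?thesis .
qed

lemma Bf_sym: "Bf a b = Bf b a"
  using Bf_2[of a b] Bf_2[of b a] by (simp add: mult.commute)

lemma Bf_nonneg: "Bf v v \<ge> 0"
proof -
  have "2 * Bf v v \<ge> 0" unfolding Bf_2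
    by (intro sum_nonneg) (simp add: nonneg)
  then show ?thesis by simp
qed

lemma const_of_adj:
  assumes "\<And>i j. i < n \<Longrightarrow> j < n \<Longrightarrow> w i j > 0 \<Longrightarrow> v i = v j"
    and "i < n" "j < n"
  shows "v i = v j"
proof -
  have "(\<lambda>a b. a < n \<and> b < n \<and> w a b > 0)\<^sup>*\<^sup>* i j"
    using conn assms unfolding graph_connected_def by blast
  then show ?thesis
    by (induction rule: rtranclp_induct) (use assms in auto)
qed

lemma Bf_zero:
  assumes "Bf v v = 0" "i < n" "j < n"
  shows "v i = v j"
proof (rule const_of_adj[OF _ assms(2,3)])
  fix a b assume ab: "a < n" "b < n" "w a b > 0"
  have "(\<Sum>i<n. \<Sum>j<n. w i j * ((v i - v j) * (v i - v j))) = 0"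
    using assms(1) Bf_2[of v v] by simp
  then have "\<forall>i\<in>{..<n}. (\<Sum>j<n. w i j * ((v i - v j) * (v i - v j))) = 0"
    by (subst (asm) sum_nonneg_eq_0_iff) (auto intro!: sum_nonneg simp: nonneg)
  then have "(\<Sum>j<n. w a j * ((v a - v j) * (v a - v j))) = 0" using ab by auto
  then have H: "\<forall>x\<in>{..<n}. w a x * ((v a - v x) * (v a - v x)) = 0"
    by (subst (asm) sum_nonneg_eq_0_iff) (use ab in \<open>auto simp: nonneg\<close>)
  have "w a b * ((v a - v b) * (v a - v b)) = 0" using H ab(2) by blast
  then show "v a = v b" using ab by simp
qed

lemma lap_zero_const:
  assumes "\<And>i. i < n \<Longrightarrow> lap w r n v i = 0" "i < n" "j < n"
  shows "v i = v j"
  by (rule Bf_zero[OF _ assms(2,3)]) (simp add: Bf_lap assms(1))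

lemma eig_nonneg:
  assumes "\<And>i. i < n \<Longrightarrow> lap w r n v i = \<nu> * v i" "k < n" "v k \<noteq> 0"
  shows "\<nu> \<ge> 0"
proof -
  have "Bf v v = \<nu> * N v"
    unfolding Bf_lap N_def by (simp add: assms(1) sum_distrib_left power2_eq_square algebra_simps)
  moreover have "N v > 0"
  proof -
    have "p k * v k ^ 2 > 0" using p_pos[OF assms(2)] assms(3) by simp
    moreover have "\<And>i. i < n \<Longrightarrow> p i * v i ^ 2 \<ge> 0" using p_pos by (simp add: less_imp_le)
    ultimately show ?thesis unfolding N_def
      by (intro sum_pos2[of "{..<n}" k]) (use assms(2) in auto)
  qed
  ultimately show ?thesis using Bf_nonneg
    by (metis linorder_not_le mult_less_0_iff not_less_iff_gr_or_eq)
qed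

lemma matvec: assumes i: "i < n" shows "(lap_mat w r n *\<^sub>v Matrix.vec n f) $ i = lap w r n f i"
proof -
  let ?d = "deg w n i"
  have "(lap_mat w r n *\<^sub>v Matrix.vec n f) $ i = (\<Sum>j<n. ?d powr (-r) * ((if i = j then ?d else 0) - w i j) * f j)"
    using i by (simp add: lap_mat_def scalar_prod_def lessThan_atLeast0 mult.commute)
  also have "\<dots> = ?d powr (-r) * ((\<Sum>j<n. (if i = j then ?d else 0) * f j) - (\<Sum>j<n. w i j * f j))"
    by (simp add: sum_distrib_left sum_subtractf algebra_simps)
  also have "(\<Sum>j<n. (if i = j then ?d else 0) * f j) = ?d * f i"
  proof -
    have "(\<Sum>j<n. (if i = j then ?d else 0) * f j) = (\<Sum>j<n. if i = j then ?d * f i else 0)"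
      by (rule sum.cong) auto
    then show ?thesis using i by simp
  qed
  also have "?d * f i = (\<Sum>j<n. w i j * f i)" by (simp add: deg_def sum_distrib_right)
  finally show ?thesis unfolding lap_def by (simp add: sum_subtractf algebra_simps)
qed

end



context grph begin

abbreviation "L \<equiv> lap_mat w r n"

lemma L_carrier: "L \<in> carrier_mat n n" by (simp add: lap_mat_def)

lemma L_idx: "i < n \<Longrightarrow> j < n \<Longrightarrow> L $$ (i,j) = deg w n i powr (-r) * ((if i = j then deg w n i else 0) - w i j)"
  by (simp add: lap_mat_def)

lemma col_sum: assumes j: "j < n" shows "(\<Sum>k<n. p k * L $$ (k,j)) = 0"
proof -
  have "(\<Sum>k<n. p k * L $$ (k,j)) = (\<Sum>k<n. (if k = j then deg w n k else 0) - w k j)"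
  proof (rule sum.cong[OF refl])
    fix k assume k: "k \<in> {..<n}"
    have "p k * deg w n k powr (-r) = 1"
      using degpos[of k] k by (simp add: p_def powr_add[symmetric])
    then show "p k * L $$ (k,j) = (if k = j then deg w n k else 0) - w k j"
      using k j by (simp add: L_idx mult.assoc[symmetric])
  qed
  also have "\<dots> = deg w n j - (\<Sum>k<n. w j k)"
    using j by (simp add: sum_subtractf sym)
  finally show ?thesis by (simp add: deg_def)
qed

definition Kx where "Kx x = Matrix.mat n n (\<lambda>(i,j). (if i = j then x else 0) - L $$ (i,j))"
definition Nx where "Nx x = Matrix.mat n n (\<lambda>(i,j). if i = 0 then p j else (if i = j then x else 0) - L $$ (i,j))"
definition Em where "Em = Matrix.mat n n (\<lambda>(i,j). if i = 0 then p j else if i = j then 1 else 0)"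

lemma poly_cp: "poly (char_poly L) x = Determinant.det (Kx x)"
proof -
  have "- char_matrix L x = Kx x"
    by (rule eq_matI) (auto simp: char_matrix_def Kx_def L_carrier lap_mat_def)
  then show ?thesis using char_poly_matrix[OF L_carrier] by simp
qed

lemma det_Em: assumes "0 < n" shows "Determinant.det Em = p 0"
proof -
  have "upper_triangular Em" unfolding upper_triangular_def Em_def by auto
  then have "Determinant.det Em = prod_list (diag_mat Em)"
    by (rule det_upper_triangular[of _ n]) (simp add: Em_def)
  also have "\<dots> = (\<Prod>i = 0..<n. Em $$ (i,i))" by (simp add: prod_list_diag_prod Em_def)
  also have "\<dots> = (\<Prod>i = 0..<n. if i = 0 then p 0 else 1)"
    by (rule prod.cong) (auto simp: Em_def)
  also have "\<dots> = p 0" using assms by (simp add: prod.delta)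
  finally show ?thesis .
qed

lemma Em_Kx: assumes "0 < n" shows "Em * Kx x = multrow 0 x (Nx x)"
proof (rule eq_matI)
  fix i j assume i: "i < dim_row (multrow 0 x (Nx x))" and j: "j < dim_col (multrow 0 x (Nx x))"
  then have i: "i < n" and j: "j < n" by (auto simp: mat_multrow_def Nx_def)
  show "(Em * Kx x) $$ (i, j) = multrow 0 x (Nx x) $$ (i, j)"
  proof (cases "i = 0")
    case True
    have "(Em * Kx x) $$ (i, j) = (\<Sum>k<n. p k * ((if k = j then x else 0) - L $$ (k,j)))"
      using i j True by (simp add: Em_def Kx_def scalar_prod_def lessThan_atLeast0)
    also have "\<dots> = (\<Sum>k<n. if k = j then p k * x else 0) - (\<Sum>k<n. p k * L $$ (k,j))"
    proof -
      have "\<And>k. p k * ((if k = j then x else 0) - L $$ (k,j)) = (if k = j then p k * x else 0) - p k * L $$ (k,j)"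
        by (cases "k = j") (simp_all add: right_diff_distrib)
      then show ?thesis by (simp add: sum_subtractf)
    qed
    also have "\<dots> = x * p j" using j col_sum[OF j] by simp
    finally show ?thesis using True i j by (simp add: mat_multrow_def Nx_def)
  next
    case False
    have "(Em * Kx x) $$ (i, j) = (\<Sum>k<n. (if i = k then 1 else 0) * Kx x $$ (k,j))"
      using i j False by (simp add: Em_def scalar_prod_def lessThan_atLeast0 Kx_def)
    also have "\<dots> = (\<Sum>k<n. if i = k then Kx x $$ (k,j) else 0)"
      by (rule sum.cong) auto
    also have "\<dots> = Kx x $$ (i,j)" using i by simp
    finally show ?thesis using False i j by (simp add: mat_multrow_def Nx_def Kx_def)
  qed
qed (auto simp: mat_multrow_def Nx_def Em_def Kx_def)

lemma det_rel: assumes "0 < n" shows "p 0 * Determinant.det (Kx x) = x * Determinant.det (Nx x)"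
proof -
  have "Determinant.det (Em * Kx x) = Determinant.det Em * Determinant.det (Kx x)"
    by (rule det_mult[of _ n]) (auto simp: Em_def Kx_def)
  also have "Determinant.det (Em * Kx x) = x * Determinant.det (Nx x)"
    using Em_Kx[OF assms] det_multrow[of 0 n "Nx x" x] assms by (simp add: Nx_def)
  finally show ?thesis using det_Em[OF assms] by simp
qed

lemma det_N0: assumes "0 < n" shows "Determinant.det (Nx 0) \<noteq> 0"
proof
  assume "Determinant.det (Nx 0) = 0"
  then obtain v where v: "v \<in> carrier_vec n" "v \<noteq> 0\<^sub>v n" "Nx 0 *\<^sub>v v = 0\<^sub>v n"
    using det_0_iff_vec_prod_zero[of "Nx 0" n] by (auto simp: Nx_def)
  define f where "f j = v $ j" for j
  have row: "(Nx 0 *\<^sub>v v) $ i = 0" if "i < n" for i using v that by simp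
  have s0: "(\<Sum>j<n. p j * f j) = 0"
    using row[OF assms] assms v(1) by (simp add: Nx_def scalar_prod_def lessThan_atLeast0 f_def)
  have li: "lap w r n f i = 0" if i: "i < n" "i \<noteq> 0" for i
  proof -
    have "v = Matrix.vec n f" using v(1) by (auto simp: f_def)
    then have "(L *\<^sub>v v) $ i = lap w r n f i" using matvec[OF i(1)] by simp
    moreover have "(Nx 0 *\<^sub>v v) $ i = - ((L *\<^sub>v v) $ i)"
      using i v(1) by (simp add: Nx_def scalar_prod_def sum_negf[symmetric] L_carrier lap_mat_def)
    ultimately show ?thesis using row[OF i(1)] by simp
  qed
  have "(\<Sum>i<n. p i * lap w r n f i) = p 0 * lap w r n f 0"
  proof -
    have "(\<Sum>i<n. p i * lap w r n f i) = (\<Sum>i\<in>{0}. p i * lap w r n f i)"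
    proof -
      have "(\<Sum>i\<in>{..<n}-{0}. p i * lap w r n f i) = 0" using li by (intro sum.neutral) auto
      moreover have "(\<Sum>i<n. p i * lap w r n f i) = p 0 * lap w r n f 0 + (\<Sum>i\<in>{..<n}-{0}. p i * lap w r n f i)"
        using assms by (subst sum.remove[of _ 0]) auto
      ultimately show ?thesis by simp
    qed
    then show ?thesis by simp
  qed
  then have "p 0 * lap w r n f 0 = 0" using sum_p_lap by simp
  then have l0: "lap w r n f 0 = 0" using p_pos[OF assms] by simp
  have lz: "lap w r n f i = 0" if "i < n" for i using li[of i] l0 that by (cases "i = 0") auto
  have c: "f i = f 0" if "i < n" for i by (rule lap_zero_const[OF lz that assms])
  have "(\<Sum>j<n. p j * f j) = (\<Sum>j<n. f 0 * p j)" by (intro sum.cong refl) (metis c lessThan_iff mult.commute)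
  then have "(\<Sum>j<n. p j * f j) = f 0 * (\<Sum>j<n. p j)" by (simp add: sum_distrib_left)
  moreover have "(\<Sum>j<n. p j) > 0" using assms p_pos by (intro sum_pos) auto
  ultimately have "f 0 = 0" using s0 by simp
  then have "v $ i = 0" if "i < n" for i using c[OF that] by (simp add: f_def)
  then have "v = 0\<^sub>v n" using v(1) by (intro eq_vecI) auto
  then show False using v(2) by simp
qed

lemma det_N_cont: "continuous_on UNIV (\<lambda>x. Determinant.det (Nx x))"
proof -
  define c where "c i j = (if i = 0 then p j else - L $$ (i,j))" for i j :: nat
  define e where "e i j = (if i \<noteq> 0 \<and> i = j then 1 else (0::real))" for i j :: nat
  have "Determinant.det (Nx x) = (\<Sum>\<pi> \<in> {\<pi>. \<pi> permutes {0..<n}}. signof \<pi> * (\<Prod>i = 0..<n. c i (\<pi> i) + x * e i (\<pi> i)))" for x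
  proof -
    have "Determinant.det (Nx x) = (\<Sum>\<pi> \<in> {\<pi>. \<pi> permutes {0..<n}}. signof \<pi> * (\<Prod>i = 0..<n. Nx x $$ (i, \<pi> i)))"
      by (rule det_def') (simp add: Nx_def)
    also have "\<dots> = (\<Sum>\<pi> \<in> {\<pi>. \<pi> permutes {0..<n}}. signof \<pi> * (\<Prod>i = 0..<n. c i (\<pi> i) + x * e i (\<pi> i)))"
    proof (intro sum.cong refl arg_cong2[where f="(*)"] prod.cong)
      fix \<pi> i assume "\<pi> \<in> {\<pi>. \<pi> permutes {0..<n}}" "i \<in> {0..<n}"
      then have "\<pi> i < n" "i < n" by (auto simp: permutes_in_image)
      then show "Nx x $$ (i, \<pi> i) = c i (\<pi> i) + x * e i (\<pi> i)"
        by (auto simp: Nx_def c_def e_def)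
    qed
    finally show ?thesis .
  qed
  then have eq: "(\<lambda>x. Determinant.det (Nx x)) = (\<lambda>x. \<Sum>\<pi> \<in> {\<pi>. \<pi> permutes {0..<n}}. signof \<pi> * (\<Prod>i = 0..<n. c i (\<pi> i) + x * e i (\<pi> i)))"
    by (rule ext)
  show ?thesis unfolding eq by (intro continuous_intros)
qed

lemma order0: assumes "0 < n" shows "order 0 (char_poly L) \<le> 1"
proof (rule ccontr)
  assume "\<not> ?thesis"
  then have "[:-0, 1:] ^ 2 dvd char_poly L" by (subst order_divides) simp
  then obtain q where q: "char_poly L = [:0,1:] ^ 2 * q" by auto
  define h where "h x = p 0 * x * poly q x" for x
  have eqh: "Determinant.det (Nx x) = h x" if "x \<noteq> 0" for x
  proof -
    have "x * Determinant.det (Nx x) = p 0 * (x^2 * poly q x)"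
      using det_rel[OF assms, of x] poly_cp[of x] q by simp
    then have "x * Determinant.det (Nx x) = x * h x" by (simp add: h_def power2_eq_square algebra_simps)
    then show ?thesis using that by simp
  qed
  have "((\<lambda>x. Determinant.det (Nx x)) \<longlongrightarrow> Determinant.det (Nx 0)) (at 0)"
    using det_N_cont by (metis UNIV_I continuous_on_def at_within_open open_UNIV)
  moreover have "((\<lambda>x. Determinant.det (Nx x)) \<longlongrightarrow> h 0) (at 0)"
  proof -
    have "(h \<longlongrightarrow> h 0) (at 0)" unfolding h_def by (intro tendsto_mult tendsto_const tendsto_ident_at isCont_tendsto_compose[OF poly_isCont])
    then show ?thesis
      by (rule Lim_transform_eventually) (auto simp: eventually_at_filter eqh)
  qed
  ultimately have "Determinant.det (Nx 0) = h 0" by (rule tendsto_unique[OF trivial_limit_at])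
  then show False using det_N0[OF assms] by (simp add: h_def)
qed

end



lemma quad_zero:
  fixes a b :: real
  assumes "\<And>t. a * t^2 + 2 * b * t \<ge> 0"
  shows "b = 0"
proof (rule ccontr)
  assume b: "b \<noteq> 0"
  define e where "e = 1 / (\<bar>a\<bar> + 1)"
  have e: "e > 0" "\<bar>a\<bar> * e < 2" unfolding e_def by (auto simp: field_simps)
  have "a * e < 2" using mult_right_mono[OF abs_ge_self[of a], of e] e by linarith
  have "a * (- b * e)^2 + 2 * b * (- b * e) = b^2 * e * (a * e - 2)"
    by (simp add: power2_eq_square algebra_simps)
  also have "\<dots> < 0" using b e \<open>a * e < 2\<close> by (intro mult_pos_neg) auto
  finally show False using assms[of "- b * e"] by simp
qed

lemma abs_le_sq: fixes x :: real shows "\<bar>x\<bar> \<le> 1 + x ^ 2"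
proof (cases "\<bar>x\<bar> \<le> 1")
  case True then show ?thesis by (simp add: add_increasing2)
next
  case False
  have "\<bar>x\<bar> * 1 \<le> \<bar>x\<bar> * \<bar>x\<bar>" using False by (intro mult_left_mono) auto
  also have "\<dots> = x ^ 2" by (simp add: power2_eq_square abs_mult_self)
  finally show ?thesis by simp
qed



context grph begin

definition ip where "ip a b = (\<Sum>i<n. p i * a i * b i)"

lemma Bf_expand: "Bf (\<lambda>i. v i + t * h i) (\<lambda>i. v i + t * h i) = Bf v v + 2 * t * Bf h v + t^2 * Bf h h"
proof -
  have "Bf (\<lambda>i. v i + t * h i) (\<lambda>i. v i + t * h i) = (\<Sum>i<n. \<Sum>j<n. w i j * v i * (v i - v j) + t * (w i j * h i * (v i - v j)) + t * (w i j * v i * (h i - h j)) + t^2 * (w i j * h i * (h i - h j)))"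
    unfolding Bf_def by (intro sum.cong refl) (simp add: algebra_simps power2_eq_square)
  also have "\<dots> = Bf v v + t * Bf h v + t * Bf v h + t^2 * Bf h h"
    unfolding Bf_def by (simp only: sum.distrib sum_distrib_left)
  finally show ?thesis using Bf_sym[of v h] by simp
qed

lemma N_expand: "N (\<lambda>i. v i + t * h i) = N v + 2 * t * ip v h + t^2 * N h"
proof -
  have "N (\<lambda>i. v i + t * h i) = (\<Sum>i<n. p i * v i ^ 2 + 2 * t * (p i * v i * h i) + t^2 * (p i * h i ^ 2))"
    unfolding N_def by (intro sum.cong refl) (simp add: algebra_simps power2_eq_square)
  also have "\<dots> = N v + 2 * t * ip v h + t^2 * N h"
    unfolding N_def ip_def by (simp only: sum.distrib sum_distrib_left)
  finally show ?thesis .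
qed

lemma Bf_cong: "(\<And>i. i < n \<Longrightarrow> a i = a' i) \<Longrightarrow> (\<And>i. i < n \<Longrightarrow> b i = b' i) \<Longrightarrow> Bf a b = Bf a' b'"
  unfolding Bf_def by (intro sum.cong refl) auto

lemma N_cong: "(\<And>i. i < n \<Longrightarrow> a i = a' i) \<Longrightarrow> N a = N a'"
  unfolding N_def by (intro sum.cong refl) auto

lemma Bf_scale: "Bf (\<lambda>i. c * a i) (\<lambda>i. c * a i) = c^2 * Bf a a"
  unfolding Bf_def by (simp add: sum_distrib_left algebra_simps power2_eq_square)

lemma N_scale: "N (\<lambda>i. c * a i) = c^2 * N a"
  unfolding N_def by (simp add: sum_distrib_left algebra_simps power2_eq_square)

lemma pv_nonneg: "i < n \<Longrightarrow> 0 \<le> p i * v i ^ 2"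
  using p_pos[of i] by simp

lemma N_nonneg: "N v \<ge> 0"
  unfolding N_def using pv_nonneg by (intro sum_nonneg) auto

lemma N_zero: "N v = 0 \<Longrightarrow> i < n \<Longrightarrow> v i = 0"
proof -
  assume "N v = 0" "i < n"
  then have "\<forall>j\<in>{..<n}. p j * v j ^ 2 = 0"
    unfolding N_def using pv_nonneg by (subst (asm) sum_nonneg_eq_0_iff) auto
  then have "p i * v i ^ 2 = 0" using \<open>i < n\<close> by blast
  then show ?thesis using \<open>i < n\<close> p_pos[of i] by simp
qed

lemma term_le_N: "i < n \<Longrightarrow> p i * v i ^ 2 \<le> N v"
  unfolding N_def using pv_nonneg
  by (intro member_le_sum) auto

end


context grph begin
definition Kset where "Kset = {v. (\<forall>i. n \<le> i \<longrightarrow> v i = 0) \<and> (\<Sum>i<n. p i * v i) = 0 \<and> N v = 1}"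

lemma cont_coord: "continuous_on S (\<lambda>x::nat\<Rightarrow>real. x i)"
  by (rule continuous_on_subset[OF continuous_on_product_coordinates]) simp

lemma Kset_compact: assumes "0 < n" shows "compact Kset"
proof -
  define pm where "pm = Min (p ` {..<n})"
  have pm: "pm > 0" using assms p_pos unfolding pm_def by (subst Min_gr_iff) auto
  have pmle: "pm \<le> p i" if "i < n" for i using that unfolding pm_def by auto
  define C where "C = 1 + 1 / pm"
  have sub: "Kset \<subseteq> PiE UNIV (\<lambda>_. {-C..C})"
  proof
    fix v assume v: "v \<in> Kset"
    have "\<bar>v i\<bar> \<le> C" for i
    proof (cases "i < n")
      case True
      have "pm * v i ^ 2 \<le> p i * v i ^ 2" using pmle[OF True] by (intro mult_right_mono) auto
      also have "\<dots> \<le> 1" using term_le_N[OF True, of v] v by (simp add: Kset_def)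
      finally have "v i ^ 2 \<le> 1 / pm" using pm by (simp add: field_simps)
      moreover have "\<bar>v i\<bar> \<le> 1 + v i ^ 2" by (rule abs_le_sq)
      ultimately show ?thesis unfolding C_def by linarith
    next
      case False then show ?thesis using v pm by (simp add: Kset_def C_def)
    qed
    then show "v \<in> PiE UNIV (\<lambda>_. {-C..C})" by (simp add: PiE_iff abs_le_iff) (meson minus_le_iff)
  qed
  have "compactin (product_topology (\<lambda>i. euclidean) UNIV) (PiE UNIV (\<lambda>_. {-C..C::real}))"
    by (subst compactin_PiE) auto
  then have cb: "compact (PiE UNIV (\<lambda>_. {-C..C::real}))"
    by (simp add: euclidean_product_topology)
  have cl: "closed Kset"
  proof -
    have "Kset = (\<Inter>i\<in>{n..}. {v. v i = 0}) \<inter> {v. (\<Sum>i<n. p i * v i) = 0} \<inter> {v. N v = 1}"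
      unfolding Kset_def by auto
    moreover have "closed (\<Inter>i\<in>{n..}. {v::nat\<Rightarrow>real. v i = 0})"
      by (intro closed_INT ballI closed_Collect_eq cont_coord continuous_on_const)
    moreover have "closed {v::nat\<Rightarrow>real. (\<Sum>i<n. p i * v i) = 0}"
      by (intro closed_Collect_eq continuous_intros cont_coord)
    moreover have "closed {v. N v = 1}"
      unfolding N_def by (intro closed_Collect_eq continuous_intros cont_coord)
    ultimately show ?thesis by auto
  qed
  show ?thesis using compact_Int_closed[OF cb cl] sub by (simp add: Int_absorb1)
qed

end


context grph begin

lemma Kset_ne: assumes "2 \<le> n" shows "Kset \<noteq> {}"
proof -
  have p0: "p 0 > 0" and p1: "p 1 > 0" using p_pos assms by auto
  define s where "s = p 0 * p 1 * (p 0 + p 1)"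
  have s: "s > 0" unfolding s_def using p0 p1 by simp
  define v where "v i = (if i = 0 then p 1 else if i = 1 then - p 0 else 0) / sqrt s" for i :: nat
  have sub: "{0, 1} \<subseteq> {..<n}" using assms by auto
  have "(\<Sum>i<n. p i * v i) = (\<Sum>i\<in>{0,1}. p i * v i)"
    by (rule sum.mono_neutral_right[symmetric, OF _ sub, symmetric]) (auto simp: v_def)
  also have "\<dots> = 0" by (simp add: v_def algebra_simps)
  finally have 1: "(\<Sum>i<n. p i * v i) = 0" .
  have "N v = (\<Sum>i\<in>{0,1}. p i * v i ^ 2)"
    unfolding N_def by (rule sum.mono_neutral_right[OF _ sub]) (auto simp: v_def)
  also have "\<dots> = (p 0 * p 1 ^ 2 + p 1 * p 0 ^ 2) / s"
    using s by (simp add: v_def power_divide add_divide_distrib)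
  also have "\<dots> = 1" using s by (simp add: s_def power2_eq_square algebra_simps)
  finally have 2: "N v = 1" .
  have "v \<in> Kset" unfolding Kset_def using 1 2 assms by (auto simp: v_def)
  then show ?thesis by auto
qed

lemma Bf_cont: "continuous_on S (\<lambda>v. Bf v v)"
  unfolding Bf_def by (intro continuous_intros cont_coord)

lemma poincare_K:
  assumes "\<forall>y\<in>Kset. m \<le> Bf y y" and "(\<Sum>i<n. p i * v i) = 0"
  shows "Bf v v \<ge> m * N v"
proof (cases "N v = 0")
  case True
  have "Bf v v = Bf (\<lambda>_. 0) (\<lambda>_. 0)" by (rule Bf_cong) (use N_zero[OF True] in auto)
  then show ?thesis using True by (simp add: Bf_def)
next
  case False
  then have Np: "N v > 0" using N_nonneg[of v] by simp
  define c where "c = 1 / sqrt (N v)"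
  define y where "y i = (if i < n then c * v i else 0)" for i
  have "N y = N (\<lambda>i. c * v i)" by (rule N_cong) (simp add: y_def)
  also have "\<dots> = c^2 * N v" by (rule N_scale)
  also have "\<dots> = 1" using Np by (simp add: c_def power_divide)
  finally have Ny: "N y = 1" .
  have "(\<Sum>i<n. p i * y i) = c * (\<Sum>i<n. p i * v i)"
    by (simp add: y_def sum_distrib_left algebra_simps)
  then have "y \<in> Kset" unfolding Kset_def using Ny assms(2) by (auto simp: y_def)
  then have "m \<le> Bf y y" using assms(1) by blast
  also have "Bf y y = Bf (\<lambda>i. c * v i) (\<lambda>i. c * v i)" by (rule Bf_cong) (simp_all add: y_def)
  also have "\<dots> = c^2 * Bf v v" by (rule Bf_scale)
  also have "\<dots> = Bf v v / N v" using Np by (simp add: c_def power_divide)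
  finally show ?thesis using Np by (simp add: field_simps)
qed

lemma spectral_gap:
  assumes "2 \<le> n"
  shows "\<exists>\<mu>>0. poly (char_poly L) \<mu> = 0 \<and> (\<forall>v. (\<Sum>i<n. p i * v i) = 0 \<longrightarrow> Bf v v \<ge> \<mu> * N v)"
proof -
  obtain vs where vs: "vs \<in> Kset" and mn: "\<forall>y\<in>Kset. Bf vs vs \<le> Bf y y"
    using continuous_attains_inf[OF Kset_compact Kset_ne[OF assms] Bf_cont] assms by auto
  define \<mu> where "\<mu> = Bf vs vs"
  have P: "Bf v v \<ge> \<mu> * N v" if "(\<Sum>i<n. p i * v i) = 0" for v
    using poincare_K[OF _ that] mn unfolding \<mu>_def by blast
  have vs0: "(\<Sum>i<n. p i * vs i) = 0" and vs1: "N vs = 1" using vs by (auto simp: Kset_def)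
  have var: "Bf h vs = \<mu> * ip vs h" if h: "(\<Sum>i<n. p i * h i) = 0" for h
  proof -
    have "(Bf h h - \<mu> * N h) * t^2 + 2 * (Bf h vs - \<mu> * ip vs h) * t \<ge> 0" for t
    proof -
      have "(\<Sum>i<n. p i * (vs i + t * h i)) = 0"
        using vs0 h by (simp add: algebra_simps sum.distrib sum_distrib_left[symmetric])
      then have "Bf (\<lambda>i. vs i + t * h i) (\<lambda>i. vs i + t * h i) \<ge> \<mu> * N (\<lambda>i. vs i + t * h i)"
        by (rule P)
      then show ?thesis unfolding Bf_expand N_expand using vs1 \<mu>_def by (simp add: algebra_simps)
    qed
    then show ?thesis using quad_zero[of "Bf h h - \<mu> * N h" "Bf h vs - \<mu> * ip vs h"] by simp
  qed
  define g where "g i = lap w r n vs i - \<mu> * vs i" for i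
  have "(\<Sum>i<n. p i * g i) = (\<Sum>i<n. p i * lap w r n vs i) - \<mu> * (\<Sum>i<n. p i * vs i)"
    by (simp add: g_def algebra_simps sum_subtractf sum_distrib_left)
  then have "(\<Sum>i<n. p i * g i) = 0" using vs0 sum_p_lap by simp
  then have "Bf g vs = \<mu> * ip vs g" by (rule var)
  then have "(\<Sum>i<n. p i * g i * lap w r n vs i) - (\<Sum>i<n. \<mu> * (p i * vs i * g i)) = 0"
    by (simp add: Bf_lap ip_def sum_distrib_left)
  then have "(\<Sum>i<n. p i * g i ^ 2) = 0"
    by (simp add: sum_subtractf[symmetric] g_def power2_eq_square algebra_simps)
  then have "N g = 0" by (simp add: N_def)
  then have eig: "lap w r n vs i = \<mu> * vs i" if "i < n" for i
    using N_zero[of g i] that by (simp add: g_def)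
  have "\<exists>k<n. vs k \<noteq> 0"
  proof (rule ccontr)
    assume "\<not> ?thesis"
    then have "N vs = N (\<lambda>_. 0)" by (intro N_cong) auto
    then show False using vs1 by (simp add: N_def)
  qed
  then obtain k where k: "k < n" "vs k \<noteq> 0" by blast
  have mu_pos: "\<mu> > 0"
  proof -
    have "\<mu> \<ge> 0" unfolding \<mu>_def by (rule Bf_nonneg)
    moreover have "\<mu> \<noteq> 0"
    proof
      assume "\<mu> = 0"
      then have c: "vs i = vs 0" if "i < n" for i using Bf_zero[of vs i 0] that assms unfolding \<mu>_def by simp
      have "(\<Sum>i<n. p i * vs i) = (\<Sum>i<n. vs 0 * p i)" by (intro sum.cong refl) (metis c lessThan_iff mult.commute)
      then have "vs 0 * (\<Sum>i<n. p i) = 0" using vs0 by (simp add: sum_distrib_left)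
      moreover have "(\<Sum>i<n. p i) > 0" using assms p_pos by (intro sum_pos) (auto simp: lessThan_empty_iff)
      ultimately have "vs 0 = 0" by simp
      then show False using c[OF k(1)] k(2) by simp
    qed
    ultimately show ?thesis by simp
  qed
  have "eigenvector L (Matrix.vec n vs) \<mu>"
    unfolding eigenvector_def
  proof (intro conjI)
    show "Matrix.vec n vs \<in> carrier_vec (dim_row L)" using L_carrier by simp
    show "Matrix.vec n vs \<noteq> 0\<^sub>v (dim_row L)"
    proof
      assume "Matrix.vec n vs = 0\<^sub>v (dim_row L)"
      then have "Matrix.vec n vs $ k = 0\<^sub>v n $ k" using L_carrier by simp
      then show False using k by simp
    qed
    show "L *\<^sub>v Matrix.vec n vs = \<mu> \<cdot>\<^sub>v Matrix.vec n vs"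
    proof (rule eq_vecI)
      fix i assume "i < dim_vec (\<mu> \<cdot>\<^sub>v Matrix.vec n vs)"
      then have i: "i < n" by simp
      show "(L *\<^sub>v Matrix.vec n vs) $ i = (\<mu> \<cdot>\<^sub>v Matrix.vec n vs) $ i"
        by (subst matvec[OF i]) (simp add: eig[OF i] i)
    qed (use L_carrier in simp)
  qed
  then have "poly (char_poly L) \<mu> = 0"
    using eigenvalue_root_char_poly[OF L_carrier] unfolding eigenvalue_def by blast
  then show ?thesis using mu_pos P by blast
qed

end


context grph begin

lemma cp_nz: "char_poly L \<noteq> 0"
  using degree_monic_char_poly[OF L_carrier] by auto

lemma roots_nonneg: assumes "poly (char_poly L) \<nu> = 0" shows "\<nu> \<ge> 0"
proof -
  have "eigenvalue L \<nu>" using eigenvalue_root_char_poly[OF L_carrier] assms by simp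
  then obtain v where ev: "eigenvector L v \<nu>" unfolding eigenvalue_def by blast
  then have v: "v \<in> carrier_vec n" "v \<noteq> 0\<^sub>v n" "L *\<^sub>v v = \<nu> \<cdot>\<^sub>v v"
    unfolding eigenvector_def using L_carrier by auto
  define f where "f i = v $ i" for i
  have vf: "v = Matrix.vec n f" using v(1) by (auto simp: f_def)
  have eig: "lap w r n f i = \<nu> * f i" if i: "i < n" for i
  proof -
    have "(L *\<^sub>v v) $ i = (\<nu> \<cdot>\<^sub>v v) $ i" using v(3) by simp
    then show ?thesis using matvec[OF i, of f] i v(1) unfolding vf by (simp add: f_def)
  qed
  have "\<exists>k<n. f k \<noteq> 0"
  proof (rule ccontr)
    assume "\<not> ?thesis"
    then have "v = 0\<^sub>v n" using v(1) by (intro eq_vecI) (auto simp: f_def)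
    then show False using v(2) by simp
  qed
  then obtain k where "k < n" "f k \<noteq> 0" by blast
  then show ?thesis using eig_nonneg[OF eig] by blast
qed

lemma zero_root: assumes n0: "0 < n" shows "poly (char_poly L) 0 = 0"
proof -
  have "eigenvector L (Matrix.vec n (\<lambda>_. 1::real)) 0"
    unfolding eigenvector_def
  proof (intro conjI)
    show "Matrix.vec n (\<lambda>_. 1::real) \<in> carrier_vec (dim_row L)" using L_carrier by simp
    show "Matrix.vec n (\<lambda>_. 1::real) \<noteq> 0\<^sub>v (dim_row L)"
    proof
      assume "Matrix.vec n (\<lambda>_. 1::real) = 0\<^sub>v (dim_row L)"
      from arg_cong[OF this, of "\<lambda>x. Matrix.vec_index x 0"] show False using n0 L_carrier by simp
    qed
    show "L *\<^sub>v Matrix.vec n (\<lambda>_. 1::real) = 0 \<cdot>\<^sub>v Matrix.vec n (\<lambda>_. 1::real)"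
    proof (rule eq_vecI)
      fix i assume "i < dim_vec (0 \<cdot>\<^sub>v Matrix.vec n (\<lambda>_. (1::real)))"
      then have i: "i < n" by simp
      show "(L *\<^sub>v Matrix.vec n (\<lambda>_. 1::real)) $ i = (0 \<cdot>\<^sub>v Matrix.vec n (\<lambda>_. 1::real)) $ i"
        by (subst matvec[OF i]) (simp add: lap_def i)
    qed (use L_carrier in simp)
  qed
  then show ?thesis
    using eigenvalue_root_char_poly[OF L_carrier] unfolding eigenvalue_def by blast
qed

lemma lam2:
  assumes n2: "2 \<le> n" and mu: "\<mu> > 0" "poly (char_poly L) \<mu> = 0"
  shows "0 < kth_eigenvalue L 2 \<and> kth_eigenvalue L 2 \<le> \<mu>"
proof -
  let ?cp = "char_poly L"
  define R where "R = {\<nu>. poly ?cp \<nu> = 0}"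
  have finR: "finite R" unfolding R_def using poly_roots_finite[OF cp_nz] .
  define Lam where "Lam = {m. poly ?cp m = 0 \<and> (\<Sum>\<nu>\<in>{\<nu>. poly ?cp \<nu> = 0 \<and> \<nu> \<le> m}. order \<nu> ?cp) \<ge> 2}"
  have k2: "kth_eigenvalue L 2 = Inf Lam" unfolding kth_eigenvalue_def Lam_def by simp
  have finL: "finite Lam" by (rule finite_subset[OF _ finR]) (auto simp: Lam_def R_def)
  have z: "poly ?cp 0 = 0" using zero_root n2 by simp
  have ord_pos: "order a ?cp \<ge> 1" if "poly ?cp a = 0" for a
    using that cp_nz order_root[of ?cp a] by simp
  have muL: "\<mu> \<in> Lam"
  proof -
    have sub: "{0, \<mu>} \<subseteq> {\<nu>. poly ?cp \<nu> = 0 \<and> \<nu> \<le> \<mu>}" using z mu by auto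
    have fin: "finite {\<nu>. poly ?cp \<nu> = 0 \<and> \<nu> \<le> \<mu>}"
      by (rule finite_subset[OF _ finR]) (auto simp: R_def)
    have "(2::nat) \<le> order 0 ?cp + order \<mu> ?cp" using ord_pos[OF z] ord_pos[OF mu(2)] by simp
    also have "\<dots> = (\<Sum>\<nu>\<in>{0, \<mu>}. order \<nu> ?cp)" using mu by simp
    also have "\<dots> \<le> (\<Sum>\<nu>\<in>{\<nu>. poly ?cp \<nu> = 0 \<and> \<nu> \<le> \<mu>}. order \<nu> ?cp)"
      by (rule sum_mono2[OF fin sub]) auto
    finally show ?thesis unfolding Lam_def using mu by simp
  qed
  have ne: "Lam \<noteq> {}" using muL by auto
  have eqmin: "Inf Lam = Min Lam" by (rule cInf_eq_Min[OF finL ne])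
  have le: "Inf Lam \<le> \<mu>" unfolding eqmin using finL muL by simp
  have inL: "Inf Lam \<in> Lam" unfolding eqmin using finL ne by simp
  then have rt: "poly ?cp (Inf Lam) = 0" unfolding Lam_def by simp
  have pos: "Inf Lam > 0"
  proof (rule ccontr)
    assume "\<not> ?thesis"
    then have i0: "Inf Lam = 0" using roots_nonneg[OF rt] by simp
    have "{\<nu>. poly ?cp \<nu> = 0 \<and> \<nu> \<le> 0} = {0}" using z roots_nonneg by force
    moreover have "0 \<in> Lam" using inL i0 by simp
    ultimately have "order 0 ?cp \<ge> 2" unfolding Lam_def by simp
    then show False using order0 n2 by simp
  qed
  show ?thesis using k2 pos le by simp
qed

end


context grph begin

lemma lap_shift: "lap w r n (\<lambda>i. v i - c) i = lap w r n v i"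
  unfolding lap_def by simp

lemma decay:
  assumes sol: "heat_solution w r n u" and mu: "\<mu> > 0"
    and P: "\<And>v. (\<Sum>i<n. p i * v i) = 0 \<Longrightarrow> Bf v v \<ge> \<mu> * N v"
    and tau: "\<tau> \<ge> 0"
    and c: "(\<Sum>i<n. p i * u 0 i) = c * (\<Sum>i<n. p i)"
  shows "N (\<lambda>i. u \<tau> i - c) \<le> exp (-2 * \<mu> * \<tau>) * N (\<lambda>i. u 0 i - c)"
proof -
  have du: "((\<lambda>s. u s i) has_real_derivative (- lap w r n (u t) i)) (at t)" if "i < n" for i t
    using sol that unfolding heat_solution_def by blast
  define m where "m t = (\<Sum>i<n. p i * u t i)" for t
  have dm: "(m has_real_derivative 0) (at t)" for t
  proof -
    have "(m has_real_derivative (\<Sum>i<n. p i * (- lap w r n (u t) i))) (at t)"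
      unfolding m_def by (intro DERIV_sum DERIV_cmult du) simp
    then show ?thesis using sum_p_lap[of "u t"] by (simp add: sum_negf)
  qed
  have mc: "m t = m 0" for t using DERIV_isconst_all dm by blast
  have zero_mean: "(\<Sum>i<n. p i * (u t i - c)) = 0" for t
  proof -
    have "(\<Sum>i<n. p i * (u t i - c)) = m t - c * (\<Sum>i<n. p i)"
      unfolding m_def by (simp add: algebra_simps sum_subtractf sum_distrib_left)
    then show ?thesis using mc[of t] c by (simp add: m_def)
  qed
  define E where "E t = N (\<lambda>i. u t i - c)" for t
  have dE: "(E has_real_derivative (- 2 * Bf (\<lambda>i. u t i - c) (\<lambda>i. u t i - c))) (at t)" for t
  proof -
    have "(E has_real_derivative (\<Sum>i<n. p i * (2 * (u t i - c) * (- lap w r n (u t) i)))) (at t)"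
      unfolding E_def N_def
      by (intro DERIV_sum DERIV_cmult) (auto intro!: derivative_eq_intros du)
    moreover have "(\<Sum>i<n. p i * (2 * (u t i - c) * (- lap w r n (u t) i))) = - 2 * Bf (\<lambda>i. u t i - c) (\<lambda>i. u t i - c)"
      unfolding Bf_lap lap_shift by (simp add: sum_distrib_left algebra_simps sum_negf)
    ultimately show ?thesis by simp
  qed
  define F where "F t = exp (2 * \<mu> * t) * E t" for t
  have "F \<tau> \<le> F 0"
  proof (rule DERIV_nonpos_imp_nonincreasing[OF tau])
    fix x :: real
    let ?v = "\<lambda>i. u x i - c"
    have "(F has_real_derivative (exp (2 * \<mu> * x) * (2 * \<mu>) * E x + exp (2 * \<mu> * x) * (- 2 * Bf ?v ?v))) (at x)"
      unfolding F_def by (auto intro!: derivative_eq_intros dE)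
    moreover have "exp (2 * \<mu> * x) * (2 * \<mu>) * E x + exp (2 * \<mu> * x) * (- 2 * Bf ?v ?v) \<le> 0"
    proof -
      have "Bf ?v ?v \<ge> \<mu> * E x" unfolding E_def by (rule P[OF zero_mean])
      then have "2 * \<mu> * E x - 2 * Bf ?v ?v \<le> 0" by simp
      then have "exp (2 * \<mu> * x) * (2 * \<mu> * E x - 2 * Bf ?v ?v) \<le> 0"
        by (simp add: mult_nonneg_nonpos)
      then show ?thesis by (simp add: algebra_simps)
    qed
    ultimately show "\<exists>y. (F has_real_derivative y) (at x) \<and> y \<le> 0" by blast
  qed
  then have "exp (2 * \<mu> * \<tau>) * E \<tau> \<le> E 0" by (simp add: F_def)
  then have "E \<tau> \<le> exp (-2 * \<mu> * \<tau>) * E 0"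
    by (simp add: exp_minus field_simps mult_exp_exp[symmetric])
  then show ?thesis by (simp add: E_def)
qed

end



theorem mainTheorem11:
  fixes w :: "nat \<Rightarrow> nat \<Rightarrow> real" and n :: nat and r \<tau> :: real
    and S :: "nat set" and u :: "real \<Rightarrow> nat \<Rightarrow> real"
  assumes sym: "\<And>i j. i < n \<Longrightarrow> j < n \<Longrightarrow> w i j = w j i"
    and nonneg: "\<And>i j. i < n \<Longrightarrow> j < n \<Longrightarrow> w i j \<ge> 0"
    and diag: "\<And>i. i < n \<Longrightarrow> w i i = 0"
    and degpos: "\<And>i. i < n \<Longrightarrow> deg w n i > 0"
    and r: "0 \<le> r" "r \<le> 1"
    and conn: "graph_connected w n"
    and S: "S \<subseteq> {..<n}" "S \<noteq> {}" "S \<noteq> {..<n}"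
    and RS: "vol w r n S / vol w r n {..<n} \<noteq> 1/2"
    and tau: "\<tau> > (1 / kth_eigenvalue (lap_mat w r n) 2) *
        ln (sqrt (vol w r n S) * sqrt (vol w r n ({..<n} - S)) /
            (sqrt (vol w r n {..<n}) * \<bar>vol w r n S / vol w r n {..<n} - 1/2\<bar>
             * dmin w n powr (r/2)))"
    and sol: "heat_solution w r n u"
    and init: "\<And>i. i < n \<Longrightarrow> u 0 i = (if i \<in> S then 1 else 0)"
  shows "(vol w r n S / vol w r n {..<n} > 1/2 \<longrightarrow> {i. i < n \<and> u \<tau> i \<ge> 1/2} = {..<n}) \<and>
         (vol w r n S / vol w r n {..<n} < 1/2 \<longrightarrow> {i. i < n \<and> u \<tau> i \<ge> 1/2} = {})"
proof -
  interpret grph w n r using sym nonneg degpos conn by unfold_locales auto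
  obtain a where a: "a \<in> S" using S(2) by auto
  obtain b where b: "b < n" "b \<notin> S" using S(1,3) by auto
  have an: "a < n" using a S(1) by auto
  have n2: "2 \<le> n"
  proof -
    have "a \<noteq> b" using a b by auto
    then have "card {a, b} = 2" by simp
    moreover have "card {a, b} \<le> card {..<n}" using an b by (intro card_mono) auto
    ultimately show ?thesis by simp
  qed
  obtain \<mu> where mu: "\<mu> > 0" "poly (char_poly L) \<mu> = 0"
    and P: "\<And>v. (\<Sum>i<n. p i * v i) = 0 \<Longrightarrow> Bf v v \<ge> \<mu> * N v"
    using spectral_gap[OF n2] by blast
  define lam where "lam = kth_eigenvalue L 2"
  have lam: "0 < lam" "lam \<le> \<mu>" using lam2[OF n2 mu] unfolding lam_def by auto
  define A where "A = vol w r n S"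
  define B where "B = vol w r n ({..<n} - S)"
  define V where "V = vol w r n {..<n}"
  have volp: "vol w r n X = (\<Sum>i\<in>X. p i)" for X unfolding vol_def p_def by simp
  have VAB: "V = A + B" unfolding V_def A_def B_def volp
    using S(1) by (metis finite_lessThan sum.subset_diff add.commute)
  define dm where "dm = dmin w n"
  have dm: "dm > 0" "\<And>i. i < n \<Longrightarrow> dm \<le> deg w n i"
  proof -
    show "dm > 0" unfolding dm_def dmin_def using degpos n2 by (subst Min_gr_iff) (auto simp: lessThan_empty_iff)
    show "\<And>i. i < n \<Longrightarrow> dm \<le> deg w n i" unfolding dm_def dmin_def by auto
  qed
  define q where "q = dm powr (r/2)"
  have q: "q > 0" "q^2 = dm powr r" using dm(1)
    by (auto simp: q_def powr_powr[symmetric] power2_eq_square powr_add[symmetric])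
  have pq: "q^2 \<le> p i" if "i < n" for i
    unfolding q(2) p_def using dm that r(1) by (intro powr_mono2) auto
  have finS: "finite S" by (rule finite_subset[OF S(1)]) simp
  have Apos: "A \<ge> q^2" unfolding A_def volp
    using pq an a p_pos S(1) finS by (intro order_trans[OF pq[OF an]] member_le_sum) (auto intro: less_imp_le)
  have Bpos: "B \<ge> q^2" unfolding B_def volp
    using pq b p_pos by (intro order_trans[OF pq[OF b(1)]] member_le_sum) (auto intro: less_imp_le)
  have Vpos: "V > 0" using VAB Apos Bpos q by (smt (verit) zero_less_power)
  define R where "R = A / V"
  have Ap: "A > 0" and Bp: "B > 0" using Apos Bpos q(1) by (smt (verit) zero_less_power)+
  have R01: "0 < R" "R < 1" using Ap Bp VAB Vpos unfolding R_def by (auto simp: divide_less_eq_1_pos)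
  define \<delta> where "\<delta> = \<bar>R - 1/2\<bar>"
  have RS': "R \<noteq> 1/2" using RS unfolding R_def A_def V_def .
  have \<delta>: "\<delta> > 0" "\<delta>^2 < 1/4"
  proof -
    show "\<delta> > 0" using RS' unfolding \<delta>_def by simp
    have "\<delta>^2 = 1/4 - R * (1 - R)" unfolding \<delta>_def power2_abs by (simp add: power2_eq_square algebra_simps)
    moreover have "R * (1 - R) > 0" using R01 by simp
    ultimately show "\<delta>^2 < 1/4" by simp
  qed
  have split: "(\<Sum>i<n. f i) = (\<Sum>i\<in>S. f i) + (\<Sum>i\<in>{..<n} - S. f i)" for f :: "nat \<Rightarrow> real"
    using S(1) by (metis finite_lessThan sum.subset_diff add.commute)
  have c: "(\<Sum>i<n. p i * u 0 i) = R * (\<Sum>i<n. p i)"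
  proof -
    have "(\<Sum>i<n. p i * u 0 i) = (\<Sum>i\<in>S. p i * u 0 i) + (\<Sum>i\<in>{..<n} - S. p i * u 0 i)" by (rule split)
    also have "(\<Sum>i\<in>S. p i * u 0 i) = A" unfolding A_def volp
      by (intro sum.cong refl) (use S(1) init in auto)
    also have "(\<Sum>i\<in>{..<n} - S. p i * u 0 i) = 0"
      by (intro sum.neutral) (use init in auto)
    finally have "(\<Sum>i<n. p i * u 0 i) = A" by simp
    moreover have "(\<Sum>i<n. p i) = V" unfolding V_def volp by simp
    ultimately show ?thesis unfolding R_def using Vpos by simp
  qed
  define E0 where "E0 = N (\<lambda>i. u 0 i - R)"
  have E0: "E0 = A * (1 - R)^2 + B * R^2"
  proof -
    have "E0 = (\<Sum>i\<in>S. p i * (u 0 i - R)^2) + (\<Sum>i\<in>{..<n} - S. p i * (u 0 i - R)^2)"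
      unfolding E0_def N_def by (rule split)
    also have "(\<Sum>i\<in>S. p i * (u 0 i - R)^2) = A * (1 - R)^2" unfolding A_def volp sum_distrib_right
      by (intro sum.cong refl) (use S(1) init in auto)
    also have "(\<Sum>i\<in>{..<n} - S. p i * (u 0 i - R)^2) = B * R^2" unfolding B_def volp sum_distrib_right
      by (intro sum.cong refl) (use init in auto)
    finally show ?thesis .
  qed
  have R1: "1 - R = B / V" using VAB Vpos unfolding R_def by (simp add: field_simps)
  have E0': "E0 = A * (B / V)^2 + B * (A / V)^2" using E0 R1 unfolding R_def by simp
  have "A * (B / V)^2 + B * (A / V)^2 = A * B * (A + B) / V^2" using Vpos by (simp add: power2_eq_square field_simps)
  also have "\<dots> = A * B / V" using Vpos VAB by (simp add: power2_eq_square)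
  finally have E03: "E0 = A * B / V" using E0' by simp
  have E0R: "E0 = R * B" "E0 = (1 - R) * A" "E0 = A * B / V"
    using E03 R1 unfolding R_def by simp_all
  have E0q: "E0 \<ge> q^2 / 2"
  proof (cases "R \<ge> 1/2")
    case True
    have "R * q^2 \<le> R * B" using Bpos R01 by (intro mult_left_mono) auto
    moreover have "q^2 / 2 \<le> R * q^2" using mult_right_mono[OF True, of "q^2"] by simp
    ultimately show ?thesis using E0R(1) by simp
  next
    case False
    have "(1 - R) * q^2 \<le> (1 - R) * A" using Apos R01 by (intro mult_left_mono) auto
    moreover have "1/2 \<le> 1 - R" using False by simp
    then have "q^2 / 2 \<le> (1 - R) * q^2" using mult_right_mono[of "1/2" "1 - R" "q^2"] by simp
    ultimately show ?thesis using E0R(2) by simp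
  qed
  have q2pos: "q^2 > 0" using q(1) by simp
  have dq: "\<delta>^2 * q^2 < E0"
  proof -
    have "\<delta>^2 * q^2 < 1/4 * q^2" using \<delta>(2) q2pos by (intro mult_strict_right_mono) auto
    then show ?thesis using E0q q2pos by linarith
  qed
  define X where "X = sqrt A * sqrt B / (sqrt V * \<delta> * q)"
  have Xpos: "X > 0" unfolding X_def using Apos Bpos Vpos \<delta> q q2pos
    by (smt (verit) divide_pos_pos mult_pos_pos real_sqrt_gt_zero)
  have X2: "X^2 = E0 / (\<delta>^2 * q^2)"
    unfolding X_def E0R(3) using Ap Bp Vpos q2pos
    by (simp add: power_divide power_mult_distrib mult.assoc)
  have X1: "X > 1"
  proof -
    have "X^2 > 1" unfolding X2 using dq \<delta> q2pos by (simp add: field_simps)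
    then show ?thesis using Xpos by (smt (verit) one_less_power power2_eq_square mult_le_one)
  qed
  have tau': "\<tau> > (1 / lam) * ln X"
    using tau unfolding X_def A_def B_def V_def \<delta>_def R_def q_def dm_def lam_def by simp
  have lnX: "ln X > 0" using X1 by simp
  have taupos: "\<tau> > 0" using tau' lnX lam(1) by (smt (verit) divide_pos_pos mult_pos_pos)
  have "lam * \<tau> > ln X" using tau' lam(1) by (simp add: field_simps)
  moreover have "lam * \<tau> \<le> \<mu> * \<tau>" using lam taupos by (intro mult_right_mono) auto
  ultimately have "\<mu> * \<tau> > ln X" by simp
  then have "exp (\<mu> * \<tau>) > X" using Xpos by (metis exp_less_cancel_iff exp_ln)
  then have "exp (\<mu> * \<tau>)^2 > X^2" using Xpos by (intro power_strict_mono) auto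
  then have ex: "exp (-2 * \<mu> * \<tau>) < 1 / X^2"
  proof -
    assume h: "exp (\<mu> * \<tau>)^2 > X^2"
    have e1: "exp (-2 * \<mu> * \<tau>) * exp (\<mu> * \<tau>)^2 = 1"
      unfolding power2_eq_square mult_exp_exp by simp
    have "exp (-2 * \<mu> * \<tau>) = 1 / exp (\<mu> * \<tau>)^2"
      using e1 by (simp add: field_simps)
    also have "\<dots> < 1 / X^2" using h Xpos by (intro divide_strict_left_mono) auto
    finally show ?thesis .
  qed
  have E0pos: "E0 > 0" using dq \<delta>(1) q2pos by (smt (verit) mult_pos_pos zero_less_power)
  define v where "v i = u \<tau> i - R" for i
  have Nv: "N v \<le> exp (-2 * \<mu> * \<tau>) * E0"
    unfolding v_def E0_def by (rule decay[OF sol mu(1) P _ c]) (use taupos in auto)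
  also have "\<dots> < 1 / X^2 * E0" using ex dq q2pos \<delta>
    by (intro mult_strict_right_mono) (auto intro: le_less_trans[of 0 "\<delta>^2 * q^2"])
  also have "\<dots> = \<delta>^2 * q^2" unfolding X2 using dq q2pos \<delta> E0pos by (simp add: field_simps)
  finally have Nv2: "N v < \<delta>^2 * q^2" .
  have small: "\<bar>v i\<bar> < \<delta>" if i: "i < n" for i
  proof -
    have "p i * v i ^ 2 < \<delta>^2 * q^2" using term_le_N[OF i, of v] Nv2 by simp
    also have "\<dots> \<le> \<delta>^2 * p i" using pq[OF i] by (intro mult_left_mono) auto
    finally have "v i ^ 2 < \<delta>^2" using p_pos[OF i] by (simp add: mult.commute)
    then have "\<bar>v i\<bar>^2 < \<delta>^2" by simp
    then show ?thesis by (rule power_less_imp_less_base) (use \<delta>(1) in simp)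
  qed
  have RR: "vol w r n S / vol w r n {..<n} = R" unfolding R_def A_def V_def ..
  show ?thesis unfolding RR
  proof (intro conjI impI)
    assume "R > 1/2"
    then have "u \<tau> i > 1/2" if "i < n" for i using small[OF that] unfolding v_def \<delta>_def by linarith
    then show "{i. i < n \<and> u \<tau> i \<ge> 1/2} = {..<n}" by force
  next
    assume "R < 1/2"
    then have "u \<tau> i < 1/2" if "i < n" for i using small[OF that] unfolding v_def \<delta>_def by linarith
    then show "{i. i < n \<and> u \<tau> i \<ge> 1/2} = {}" by force
  qed
qed

end
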